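(* Let $G=(P,t_2Q)$ be a pair of homogeneous polynomials in $(t_1,t_2)$ of degree $d$ with $P(1,0)\ne0$. Then the resultant of $F=F_{t_1,t_2}(G)/t_2^2$ is $$\mathrm{Res}(F)=4^{4d}[Q(1,1)-P(1,1)]^4P(0,1)^4P(1,0)^{-8}\mathrm{Res}(G)^{16}.$$ In particular, for a homogeneous lift $C$ of a marked point $c\in\mathbb{C}(t)\setminus\{0,1,t\}$ with $F_1=F_{t_1,t_2}(C)/\gcd(F_{t_1,t_2}(C))=(P_1,Q_1)$, $d=\deg F_1$, and $F_{n+1}=F_{t_1,t_2}(F_n)/t_2^2$, one has for all $n\ge1$ $$\mathrm{Res}(F_n)=4^{A_nd}\left(\frac{(P_1(1,1)-Q_1(1,1))P_1(0,1)}{P_1(1,0)^2}\right)^{A_n}\mathrm{Res}(F_1)^{4^{2(n-1)}},\qquad A_n=\frac{4^{2(n-1)}-4^{n-1}}{3}.$$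
   Context: $F_{t_1,t_2}(z,w)=\big((t_1w^2-t_2z^2)^2,\;4t_2zw(w-z)(t_1w-t_2z)\big)$; for a pair of homogeneous polynomials $H=(H_1,H_2)$ in $(t_1,t_2)$, $F_{t_1,t_2}(H)$ means substituting $(z,w)=(H_1,H_2)$. $\mathrm{Res}$ denotes the resultant (Sylvester determinant) of a pair of homogeneous polynomials of the same degree. A homogeneous lift of $c$ is a pair of coprime homogeneous polynomials $C=(c_1,c_2)$ of equal degree with $c(t)=c_1(t,1)/c_2(t,1)$; $\gcd$ denotes the gcd of the two coordinates. *)

theory Defs
  imports "Subresultants.Resultant_Prelim" "HOL-Computational_Algebra.Fraction_Field" "HOL-Computational_Algebra.Polynomial_Factorial" "HOL-Computational_Algebra.Field_as_Ring"
begin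

text \<open>Bivariate polynomials in (t1,t2) over the complex numbers are encoded as
  complex poly poly: the outer variable is t1, the inner (coefficient) variable is t2.
  So  coeff (coeff H i) j  is the coefficient of  t1^i * t2^j.\<close>

type_synonym bpoly = "complex poly poly"

definition T1 :: bpoly where "T1 = [:0, 1:]"
definition T2 :: bpoly where "T2 = [:[:0, 1:]:]"

definition is_hom :: "nat \<Rightarrow> bpoly \<Rightarrow> bool" where
  "is_hom d H \<longleftrightarrow> (\<forall>i j. coeff (coeff H i) j \<noteq> 0 \<longrightarrow> i + j = d)"

definition total_degree :: "bpoly \<Rightarrow> nat" where
  "total_degree H = Max ({i + j | i j. coeff (coeff H i) j \<noteq> 0} \<union> {0})"

definition eval2 :: "bpoly \<Rightarrow> complex \<Rightarrow> complex \<Rightarrow> complex" where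
  "eval2 H a b = poly (map_poly (\<lambda>c. poly c b) H) a"

definition hcoeffs :: "nat \<Rightarrow> bpoly \<Rightarrow> complex poly" where
  "hcoeffs d H = Poly (map (\<lambda>i. coeff (coeff H i) (d - i)) [0..<Suc d])"

definition hdeg :: "bpoly \<times> bpoly \<Rightarrow> nat" where
  "hdeg H = max (total_degree (fst H)) (total_degree (snd H))"

definition Res :: "bpoly \<times> bpoly \<Rightarrow> complex" where
  "Res H = resultant_sub (hdeg H) (hdeg H) (hcoeffs (hdeg H) (fst H)) (hcoeffs (hdeg H) (snd H))"

definition Fmap :: "bpoly \<times> bpoly \<Rightarrow> bpoly \<times> bpoly" where
  "Fmap H = (let z = fst H; w = snd H in
     ((T1 * w^2 - T2 * z^2)^2, 4 * T2 * z * w * (w - z) * (T1 * w - T2 * z)))"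

definition pair_div :: "bpoly \<times> bpoly \<Rightarrow> bpoly \<Rightarrow> bpoly \<times> bpoly" where
  "pair_div H g = (fst H div g, snd H div g)"

definition pair_gcd :: "bpoly \<times> bpoly \<Rightarrow> bpoly" where
  "pair_gcd H = gcd (fst H) (snd H)"

definition dehom :: "bpoly \<Rightarrow> complex poly" where
  "dehom H = map_poly (\<lambda>c. poly c 1) H"

definition is_hom_lift :: "complex poly fract \<Rightarrow> bpoly \<times> bpoly \<Rightarrow> bool" where
  "is_hom_lift c C \<longleftrightarrow> coprime (fst C) (snd C) \<and>
     (\<exists>e. is_hom e (fst C) \<and> is_hom e (snd C)) \<and>
     c = Fract (dehom (fst C)) (dehom (snd C))"

end

theory Submission
  imports Defs "HOL-Computational_Algebra.Fundamental_Theorem_Algebra" "Subresultants.Subresultant"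
begin


definition Rp :: "complex poly \<Rightarrow> complex poly \<Rightarrow> complex" where
  "Rp p q = (\<Prod>a\<in>#proots p. poly q a)"

lemma prod_mset_const_c: "(\<Prod>x\<in>#A. (c::'a::comm_monoid_mult)) = c ^ size A"
  by (induction A) auto

lemma prod_mset_poly_const: "(\<Prod>x\<in>#A. poly [:c:] x) = (c::'a::comm_ring_1) ^ size A"
  by (induction A) auto

lemma poly_via_roots: "poly (q::complex poly) x = lead_coeff q * (\<Prod>g\<in>#proots q. x - g)"
proof -
  have "poly q x = poly (smult (lead_coeff q) (\<Prod>x\<in>#proots q. [:-x, 1:])) x"
    by (simp only: complex_poly_decompose_multiset)
  also have "\<dots> = lead_coeff q * (\<Prod>g\<in>#proots q. x - g)"
    by (simp add: poly_prod_mset multiset.map_comp o_def)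
  finally show ?thesis .
qed

lemma Rp_expand: "Rp p q = lead_coeff q ^ degree p * (\<Prod>a\<in>#proots p. \<Prod>g\<in>#proots q. a - g)"
  unfolding Rp_def poly_via_roots[of q]
  by (simp add: prod_mset.distrib prod_mset_const_c size_proots_complex)

lemma Sw: "lead_coeff p ^ degree q * Rp p q = (-1)^(degree p * degree q) * lead_coeff q ^ degree p * Rp q p"
proof -
  have "(\<Prod>g\<in>#proots q. \<Prod>a\<in>#proots p. g - a) = (\<Prod>g\<in>#proots q. (-1)^degree p * (\<Prod>a\<in>#proots p. a - g))"
  proof (rule arg_cong[where f=prod_mset], rule image_mset_cong)
    fix g
    have "(\<Prod>a\<in>#proots p. g - a) = (\<Prod>a\<in>#proots p. (-1) * (a - g))" by simp
    also have "\<dots> = (-1)^degree p * (\<Prod>a\<in>#proots p. a - g)"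
      by (simp only: prod_mset.distrib prod_mset_const_c size_proots_complex)
    finally show "(\<Prod>a\<in>#proots p. g - a) = (-1)^degree p * (\<Prod>a\<in>#proots p. a - g)" .
  qed
  also have "\<dots> = (-1)^(degree p * degree q) * (\<Prod>a\<in>#proots p. \<Prod>g\<in>#proots q. a - g)"
    by (simp only: prod_mset.distrib prod_mset_const_c size_proots_complex prod_mset.swap[of _ "proots q"] power_mult)
  finally have *: "(\<Prod>g\<in>#proots q. \<Prod>a\<in>#proots p. g - a) = (-1)^(degree p * degree q) * (\<Prod>a\<in>#proots p. \<Prod>g\<in>#proots q. a - g)" .
  show ?thesis unfolding Rp_expand[of p q] Rp_expand[of q p] *
    by (simp add: algebra_simps power_mult_distrib flip: power_mult)
qed

lemma Rp_cong_mod: assumes "G \<noteq> 0" shows "Rp G F = Rp G (F mod G)"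
  unfolding Rp_def
proof (rule arg_cong[where f=prod_mset], rule image_mset_cong)
  fix x assume "x \<in># proots G"
  hence "poly G x = 0" using assms by simp
  moreover have "F = F div G * G + F mod G" by simp
  hence "poly F x = poly (F div G) x * poly G x + poly (F mod G) x"
    by (metis poly_add poly_mult)
  ultimately show "poly F x = poly (F mod G) x" by simp
qed

lemma res_step:
  fixes F G :: "complex poly"
  assumes IH: "\<And>p q. degree p + degree q < degree F + degree G \<Longrightarrow> p \<noteq> 0 \<Longrightarrow>
      resultant p q = lead_coeff p ^ degree q * Rp p q"
  and G1: "degree G \<ge> 1" and dfg: "degree G \<le> degree F"
  shows "resultant F G = (-1)^(degree F * degree G) * lead_coeff G ^ degree F * Rp G F"
proof -
  have G0: "G \<noteq> 0" using G1 by auto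
  define H where "H = F mod G"
  have FBG: "F + (- (F div G)) * G = H" unfolding H_def
    by (simp add: minus_div_mult_eq_mod[symmetric])
  have dh: "degree H < degree G" using degree_mod_less[OF G0, of F] G1 unfolding H_def by auto
  have RpGF: "Rp G F = Rp G H" unfolding H_def by (rule Rp_cong_mod[OF G0])
  show ?thesis
  proof (cases "degree H = 0")
    case True
    then obtain h where Hh: "H = [:h:]" using degree0_coeffs[OF True] by blast
    have "subresultant (degree H) F G = smult ((- 1) ^ ((degree F - degree H) * (degree G - degree H)) *
       lead_coeff G ^ (degree F - degree H) * lead_coeff H ^ (degree G - degree H - 1)) H"
      by (rule BT_lemma_1_13[OF FBG dfg]) (use dh in auto)
    hence "resultant F G = (- 1) ^ (degree F * degree G) * lead_coeff G ^ degree F * (h ^ (degree G - 1) * h)"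
      using True Hh arg_cong[OF \<open>subresultant (degree H) F G = _\<close>, of "\<lambda>x. coeff x 0"]
      by (simp add: subresultant_resultant mult.assoc)
    also have "h ^ (degree G - 1) * h = h ^ degree G"
    proof -
      obtain k where "degree G = Suc k" using G1 by (cases "degree G") auto
      thus ?thesis by (simp add: power_Suc2)
    qed
    also have "h ^ degree G = Rp G H" unfolding Rp_def Hh by (simp add: prod_mset_poly_const size_proots_complex)
    finally show ?thesis using RpGF by (simp add: mult.assoc)
  next
    case False
    have "subresultant 0 F G = smult ((- 1) ^ ((degree F - 0) * (degree G - 0)) *
       lead_coeff G ^ (degree F - degree H)) (subresultant 0 G H)"
      by (rule BT_lemma_1_12[OF FBG dfg]) (use dh False in auto)
    hence "resultant F G = (- 1) ^ (degree F * degree G) * lead_coeff G ^ (degree F - degree H) * resultant G H"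
      by (simp add: subresultant_resultant)
    also have "resultant G H = lead_coeff G ^ degree H * Rp G H"
      by (rule IH) (use dh dfg G0 in auto)
    finally show ?thesis using RpGF dh dfg
      by (simp add: mult.assoc power_add[symmetric])
  qed
qed

lemma res_exact:
  fixes p q :: "complex poly"
  assumes "p \<noteq> 0"
  shows "resultant p q = lead_coeff p ^ degree q * Rp p q"
  using assms
proof (induction "degree p + degree q" arbitrary: p q rule: less_induct)
  case less
  show ?case
  proof (cases "degree q = 0")
    case True
    then obtain c where q: "q = [:c:]" using degree0_coeffs[OF True] by blast
    show ?thesis unfolding q Rp_def by (simp add: prod_mset_poly_const size_proots_complex)
  next
    case q1: False
    show ?thesis
    proof (cases "degree p = 0")
      case True
      then obtain c where p: "p = [:c:]" using degree0_coeffs[OF True] by blast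
      show ?thesis unfolding p Rp_def by simp
    next
      case p1: False
      have q0: "q \<noteq> 0" using q1 by auto
      show ?thesis
      proof (cases "degree q \<le> degree p")
        case True
        have "resultant p q = (-1)^(degree p * degree q) * lead_coeff q ^ degree p * Rp q p"
        proof (rule res_step)
          fix pa qa :: "complex poly"
          assume "degree pa + degree qa < degree p + degree q" "pa \<noteq> 0"
          thus "resultant pa qa = lead_coeff pa ^ degree qa * Rp pa qa" by (rule less.hyps)
        qed (use True q1 in auto)
        also have "\<dots> = lead_coeff p ^ degree q * Rp p q" using Sw[of p q] by (rule sym)
        finally show ?thesis .
      next
        case False
        have "resultant q p = (-1)^(degree q * degree p) * lead_coeff p ^ degree q * Rp p q"
        proof (rule res_step)
          fix pa qa :: "complex poly"
          assume "degree pa + degree qa < degree q + degree p" "pa \<noteq> 0"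
          thus "resultant pa qa = lead_coeff pa ^ degree qa * Rp pa qa" 
            by (intro less.hyps) (simp_all add: add.commute)
        qed (use False p1 in auto)
        have sq: "(-1::complex)^n * ((-1)^n * X) = X" for n X
        proof -
          have "(-1::complex)^n * ((-1)^n * X) = ((-1)*(-1))^n * X" by (simp only: power_mult_distrib mult.assoc)
          thus ?thesis by simp
        qed
        have "resultant p q = (-1)^(degree p * degree q) * resultant q p" by (rule resultant_swap)
        also have "\<dots> = (-1)^(degree p * degree q) * ((-1)^(degree p * degree q) * (lead_coeff p ^ degree q * Rp p q))"
          unfolding \<open>resultant q p = _\<close> by (simp only: mult.commute[of "degree q" "degree p"] mult.assoc)
        finally show ?thesis unfolding sq .
      qed
    qed
  qed
qed

lemma res_sub_shrink:
  fixes p q :: "'a :: comm_ring_1 poly"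
  assumes dq: "degree q < n"
  shows "resultant_sub m n p q = coeff p m * resultant_sub m (n - 1) p q"
proof -
  let ?S = "sylvester_mat_sub m n p q"
  have n0: "n > 0" using dq by auto
  then obtain k where k: "m + n = Suc k" by (cases n) auto
  have S: "?S \<in> carrier_mat (m+n) (m+n)" by auto
  have "det ?S = (\<Sum>i<m+n. ?S $$ (i,0) * cofactor ?S i 0)"
    by (rule laplace_expansion_column[OF S]) (use n0 in auto)
  also have "\<dots> = ?S $$ (0,0) * cofactor ?S 0 0 + (\<Sum>i<k. ?S $$ (Suc i,0) * cofactor ?S (Suc i) 0)"
    unfolding k by (rule sum.lessThan_Suc_shift)
  also have "(\<Sum>i<k. ?S $$ (Suc i,0) * cofactor ?S (Suc i) 0) = 0"
  proof (rule sum.neutral, intro ballI)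
    fix i assume i: "i \<in> {..<k}"
    have "?S $$ (Suc i, 0) = 0"
      using i k dq by (subst sylvester_mat_sub_index) (auto intro: coeff_eq_0)
    thus "?S $$ (Suc i,0) * cofactor ?S (Suc i) 0 = 0" by simp
  qed
  also have "?S $$ (0,0) = coeff p m" using n0 by (subst sylvester_mat_sub_index) auto
  also have "cofactor ?S 0 0 = det (mat_delete ?S 0 0)" unfolding cofactor_def by simp
  also have "mat_delete ?S 0 0 = sylvester_mat_sub m (n - 1) p q"
  proof (rule eq_matI)
    fix i j assume i: "i < dim_row (sylvester_mat_sub m (n - 1) p q)"
      and j: "j < dim_col (sylvester_mat_sub m (n - 1) p q)"
    have "mat_delete ?S 0 0 $$ (i,j) = ?S $$ (Suc i, Suc j)"
      unfolding mat_delete_def using i j n0 by auto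
    also have "\<dots> = sylvester_mat_sub m (n - 1) p q $$ (i,j)"
      using i j n0 dq
      by (subst sylvester_mat_sub_index, simp, simp, subst sylvester_mat_sub_index, simp, simp)
         (auto intro!: coeff_eq_0)
    finally show "mat_delete ?S 0 0 $$ (i,j) = sylvester_mat_sub m (n - 1) p q $$ (i,j)" .
  qed (use n0 in auto)
  finally show ?thesis unfolding resultant_sub_def by simp
qed

lemma res_sub_formal:
  fixes p q :: "'a :: comm_ring_1 poly"
  assumes "degree q \<le> n"
  shows "resultant_sub m n p q = coeff p m ^ (n - degree q) * resultant_sub m (degree q) p q"
  using assms
proof (induction n)
  case 0 thus ?case by simp
next
  case (Suc n)
  show ?case
  proof (cases "degree q = Suc n")
    case True thus ?thesis by simp
  next
    case False
    hence "degree q \<le> n" "degree q < Suc n" using Suc by auto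
    thus ?thesis using Suc.IH res_sub_shrink[of q "Suc n" m p]
      by (simp add: Suc_diff_le)
  qed
qed

lemma R2:
  fixes p q :: "complex poly"
  assumes "p \<noteq> 0" "degree p = m" "degree q \<le> n"
  shows "resultant_sub m n p q = lead_coeff p ^ n * Rp p q"
proof -
  have "resultant_sub m n p q = lead_coeff p ^ (n - degree q) * resultant p q"
    using res_sub_formal[OF assms(3), of m p] assms(2) by (simp add: resultant_sub)
  also have "\<dots> = lead_coeff p ^ n * Rp p q" using res_exact[OF assms(1), of q] assms(3)
    by (simp add: mult.assoc power_add[symmetric])
  finally show ?thesis .
qed



lemma Rp_fun: "(\<And>x. poly h x = f x) \<Longrightarrow> Rp g h = (\<Prod>x\<in>#proots g. f x)"
  unfolding Rp_def by (rule arg_cong[where f=prod_mset], rule image_mset_cong) auto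

lemma Rp_mult: "Rp g (a * b) = Rp g a * Rp g b"
  by (subst Rp_fun[where f="\<lambda>x. poly a x * poly b x"]) (auto simp: prod_mset.distrib Rp_def)

lemma Rp_const: "Rp g [:c:] = c ^ degree g"
  unfolding Rp_def by (simp add: prod_mset_poly_const size_proots_complex)

lemma Rp_smult: "Rp g (smult c h) = c ^ degree g * Rp g h"
  by (subst Rp_fun[where f="\<lambda>x. c * poly h x"]) 
     (auto simp: prod_mset.distrib Rp_def prod_mset_const_c size_proots_complex)

lemma Rp_one: "Rp g 1 = 1"
  by (subst Rp_fun[where f="\<lambda>x. 1"]) auto

lemma Rp_power: "Rp g (h ^ k) = Rp g h ^ k"
  by (induction k) (simp_all add: Rp_mult Rp_one)

lemma Rp_uminus: "Rp g (- h) = (-1) ^ degree g * Rp g h"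
  using Rp_smult[of g "-1" h] by simp

lemma Rp_cong: assumes "\<And>x. poly g x = 0 \<Longrightarrow> poly h1 x = poly h2 x"
  shows "Rp g h1 = Rp g h2"
proof (cases "g = 0")
  case True thus ?thesis by (simp add: Rp_def)
next
  case False
  show ?thesis
  unfolding Rp_def by (rule arg_cong[where f=prod_mset], rule image_mset_cong) (use assms False in auto)
qed

lemma Rp_sq: assumes "g \<noteq> 0" shows "Rp (g ^ 2) h = Rp g h ^ 2"
proof -
  have "proots (g^2) = proots g + proots g" using assms by (simp add: proots_mult power2_eq_square)
  thus ?thesis unfolding Rp_def by (simp add: power2_eq_square)
qed

lemma Rp_X_0: "poly g 0 = lead_coeff g * (-1) ^ degree g * Rp g [:0,1:]"
proof -
  have "poly g 0 = lead_coeff g * (\<Prod>b\<in>#proots g. 0 - b)" by (rule poly_via_roots)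
  also have "(\<Prod>b\<in>#proots g. 0 - b) = (\<Prod>b\<in>#proots g. (-1) * b)" by simp
  also have "\<dots> = (-1) ^ degree g * Rp g [:0,1:]"
    by (subst Rp_fun[where f="\<lambda>x. x"]) 
       (simp_all only: prod_mset.distrib prod_mset_const_c size_proots_complex, simp)
  finally show ?thesis by (simp add: mult.assoc)
qed

lemma Rp_X_1: "poly g 1 = lead_coeff g * (-1) ^ degree g * Rp g [:-1,1:]"
proof -
  have "poly g 1 = lead_coeff g * (\<Prod>b\<in>#proots g. 1 - b)" by (rule poly_via_roots)
  also have "(\<Prod>b\<in>#proots g. 1 - b) = (\<Prod>b\<in>#proots g. (-1) * (b - 1))" by simp
  also have "\<dots> = (-1) ^ degree g * Rp g [:-1,1:]"
    by (subst Rp_fun[where f="\<lambda>x. x - 1"]) 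
       (simp_all only: prod_mset.distrib prod_mset_const_c size_proots_complex, simp)
  finally show ?thesis by (simp add: mult.assoc)
qed


lemma core_g:
  fixes p q :: "complex poly"
  assumes p0: "p \<noteq> 0" and dq: "q = 0 \<or> degree q < degree p"
  shows "degree ([:0,1:] * q^2 - p^2) = 2 * degree p \<and> lead_coeff ([:0,1:] * q^2 - p^2) = - (lead_coeff p ^ 2)"
proof (cases "q = 0")
  case True
  hence "[:0,1:] * q^2 - p^2 = - (p^2)" by simp
  moreover have "degree (p^2) = 2 * degree p" by (simp add: degree_power_eq[OF p0])
  moreover have "lead_coeff (p^2) = lead_coeff p ^2" by (rule lead_coeff_power)
  ultimately show ?thesis by (simp add: degree_minus coeff_minus)
next
  case False
  have e: "[:0,1:] * q^2 - p^2 = [:0,1:] * q^2 + (- (p^2))" by simp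
  have "degree ([:0,1:] * q^2) = 1 + 2 * degree q" using False
    by (simp add: degree_mult_eq degree_power_eq)
  also have "\<dots> < degree (- (p^2))" using dq False p0 by (simp add: degree_power_eq)
  finally have lt: "degree ([:0,1:] * q^2) < degree (- (p^2))" .
  have L1: "degree ([:0,1:] * q^2 + (- (p^2))) = degree (- (p^2))" by (rule degree_add_eq_right[OF lt])
  have L2: "lead_coeff ([:0,1:] * q^2 + (- (p^2))) = lead_coeff (- (p^2))" by (rule lead_coeff_add_le[OF lt])
  have dp2: "degree (- (p^2)) = 2 * degree p" by (simp add: degree_power_eq[OF p0])
  have lp2: "lead_coeff (- (p^2)) = - (lead_coeff p ^ 2)" by (simp only: lead_coeff_minus lead_coeff_power)
  show ?thesis unfolding e
  proof
    show "degree ([:0,1:] * q^2 + (- (p^2))) = 2 * degree p" by (simp only: L1 dp2)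
    show "lead_coeff ([:0,1:] * q^2 + (- (p^2))) = - (lead_coeff p ^ 2)" by (simp only: L2 lp2)
  qed
qed

lemma core_r:
  fixes p q :: "complex poly"
  assumes p0: "p \<noteq> 0" and dq: "q = 0 \<or> degree q < degree p"
  shows "degree (q - p) = degree p \<and> lead_coeff (q - p) = - lead_coeff p"
proof (cases "q = 0")
  case True thus ?thesis by simp
next
  case False
  have e: "q - p = q + (- p)" by simp
  have lt: "degree q < degree (- p)" using dq False by simp
  show ?thesis unfolding e using degree_add_eq_right[OF lt] lead_coeff_add_le[OF lt] by simp
qed

lemma core1:
  fixes p q :: "complex poly"
  assumes p0: "p \<noteq> 0" and dq: "q = 0 \<or> degree q < degree p"
  shows "Rp ([:0,1:] * q^2 - p^2) (4 * p * q * (q - p) * ([:0,1:] * q - p)) ^ 2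
     = 4^(4 * degree p) * (poly q 1 - poly p 1)^4 * poly p 0^4 / lead_coeff p^8 * Rp p q ^ 16"
proof -
  define d where "d = degree p"
  define a where "a = lead_coeff p"
  define g where "g = [:0,1:] * q^2 - p^2"
  define r where "r = q - p"
  have a0: "a \<noteq> 0" using p0 unfolding a_def by simp
  have dg: "degree g = 2 * d" and lg: "lead_coeff g = - (a^2)"
    using core_g[OF p0 dq] unfolding g_def d_def a_def by auto
  have g0: "g \<noteq> 0" using lg a0 by auto
  have dr: "degree r = d" and lr: "lead_coeff r = - a"
    using core_r[OF p0 dq] unfolding r_def d_def a_def by auto
  have r0: "r \<noteq> 0" using lr a0 by auto
  have "Rp g (4 * p * q * (q - p) * ([:0,1:] * q - p)) = Rp g (smult (-4) ([:0,1:] * q^2 * r^2))"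
  proof (rule Rp_cong)
    fix x assume "poly g x = 0"
    hence h: "poly p x ^ 2 = x * poly q x ^ 2" unfolding g_def by simp
    have "poly (4 * p * q * (q - p) * ([:0,1:] * q - p)) x
      = -4 * x * poly q x^2 * (poly q x - poly p x)^2
        + 4 * poly q x * (poly q x - poly p x) * (x * poly q x ^ 2 - poly p x ^ 2)"
      by (simp add: algebra_simps power2_eq_square)
    also have "\<dots> = -4 * x * poly q x^2 * (poly q x - poly p x)^2" using h by simp
    finally show "poly (4 * p * q * (q - p) * ([:0,1:] * q - p)) x = poly (smult (-4) ([:0,1:] * q^2 * r^2)) x"
      unfolding r_def by simp
  qed
  also have "\<dots> = (-4)^(degree g) * (Rp g [:0,1:] * Rp g q ^ 2 * Rp g r ^ 2)"
    by (simp only: Rp_smult Rp_mult Rp_power)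
  also have "\<dots> = (-4)^(2*d) * Rp g [:0,1:] * Rp g q ^ 2 * Rp g r ^ 2"
    by (simp only: dg mult.assoc)
  finally have main: "Rp g (4 * p * q * (q - p) * ([:0,1:] * q - p)) = (-4)^(2*d) * Rp g [:0,1:] * Rp g q ^ 2 * Rp g r ^ 2" .
  have "poly g 0 = - (a^2) * Rp g [:0,1:]" using Rp_X_0[of g] unfolding lg unfolding dg by (simp add: power_mult)
  moreover have "poly g 0 = - (poly p 0 ^ 2)" unfolding g_def by simp
  ultimately have RgX: "Rp g [:0,1:] = poly p 0 ^ 2 / a^2" using a0 by (simp add: field_simps)
  have Rgq: "Rp g q = Rp p q ^ 2"
  proof (cases "q = 0")
    case True
    show ?thesis unfolding True using Rp_const[of g 0] Rp_const[of p 0] dg d_def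
      by (simp add: power_mult[symmetric] mult.commute)
  next
    case q0: False
    let ?e = "degree q"
    have s1: "lead_coeff g ^ ?e * Rp g q = (-1)^(degree g * ?e) * lead_coeff q ^ degree g * Rp q g" by (rule Sw)
    have "Rp q g = Rp q (- (p^2))"
      by (rule Rp_cong) (simp add: g_def)
    also have "\<dots> = (-1)^?e * Rp q p ^ 2" by (simp add: Rp_uminus Rp_power)
    finally have s2: "Rp q g = (-1)^?e * Rp q p ^ 2" .
    have s3: "a ^ ?e * Rp p q = (-1)^(d * ?e) * lead_coeff q ^ d * Rp q p" using Sw[of p q] unfolding a_def d_def .
    have "(-1)^?e * a^(2 * ?e) * Rp g q = lead_coeff g ^ ?e * Rp g q"
      unfolding lg by (simp add: power_mult_distrib power_mult power_minus[of "a^2"])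
    also have "\<dots> = lead_coeff q ^ (2*d) * ((-1)^?e * Rp q p ^ 2)"
      unfolding s1 unfolding s2 dg by (simp add: power_mult)
    also have "\<dots> = (-1)^?e * ((-1)^(d * ?e) * lead_coeff q ^ d * Rp q p)^2"
      by (simp add: power_mult_distrib power_mult[symmetric] mult.commute[of 2] power_mult_distrib[symmetric] mult_ac)
    also have "\<dots> = (-1)^?e * a^(2 * ?e) * Rp p q ^ 2"
      unfolding s3[symmetric] by (simp add: power_mult_distrib power_mult mult_ac)
    finally show ?thesis using a0 by simp
  qed
  have Rgr: "Rp g r = - (poly q 1 - poly p 1) * Rp p q ^ 2 / a"
  proof -
    have s1: "(-(a^2))^d * Rp g r = (-1)^(2*d*d) * (-a)^(2*d) * Rp r g"
      using Sw[of g r] unfolding lg lr unfolding dg dr .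
    have "Rp r g = Rp r ([:-1,1:] * p^2)"
    proof (rule Rp_cong)
      fix x assume "poly r x = 0"
      hence "poly q x = poly p x" unfolding r_def by simp
      thus "poly g x = poly ([:-1,1:] * p^2) x" unfolding g_def by (simp add: algebra_simps)
    qed
    also have "\<dots> = Rp r [:-1,1:] * Rp r p ^ 2" by (simp only: Rp_mult Rp_power)
    finally have s2: "Rp r g = Rp r [:-1,1:] * Rp r p ^ 2" .
    have s3: "poly r 1 = - a * (-1)^d * Rp r [:-1,1:]" using Rp_X_1[of r] unfolding lr unfolding dr .
    have s4: "a ^ d * Rp p r = (-1)^(d * d) * (-a) ^ d * Rp r p" using Sw[of p r] unfolding lr unfolding dr a_def d_def .
    have "Rp p r = Rp p q" by (rule Rp_cong) (simp add: r_def)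
    have ev: "(-1::complex)^(d * d) * (-1)^d = 1"
    proof -
      have "even (d * d + d)" by auto
      hence "(-1::complex)^(d*d+d) = 1" by simp
      thus ?thesis by (simp add: power_add)
    qed
    have "(-1::complex)^(d * d) * (-a) ^ d = a^d"
      using ev by (metis mult.assoc mult.left_neutral power_minus)
    hence Rrp: "Rp r p = Rp p q" using s4 \<open>Rp p r = Rp p q\<close> a0 by simp
    have X1: "Rp r [:-1,1:] = - poly r 1 * (-1)^d / a" using s3 a0
      by (simp add: field_simps)
    have H: "a^(2*d) * ((-1)^d * Rp g r) = a^(2*d) * (Rp r [:-1,1:] * Rp p q ^ 2)"
    proof -
      have e1: "(-(a^2))^d = (-1)^d * a^(2*d)" by (simp add: power_minus[of "a^2"] power_mult)
      have e2: "(-1::complex)^(2*d*d) = 1" by (simp add: power_mult)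
      have e3: "(-a)^(2*d) = a^(2*d)" by (simp add: power_mult)
      from s1 show ?thesis unfolding e1 e2 e3 s2 Rrp by (simp add: mult_ac)
    qed
    have c0: "a^(2*d) \<noteq> 0" using a0 by simp
    have H2: "(-1)^d * Rp g r = Rp r [:-1,1:] * Rp p q ^ 2" using H c0 a0 by auto
    have sq: "(-1::complex)^d * (-1)^d = 1" by (simp flip: power_add)
    have "Rp g r = (-1)^d * ((-1)^d * Rp g r)" using sq by (simp add: mult.assoc[symmetric])
    also have "\<dots> = (-1)^d * (Rp r [:-1,1:] * Rp p q ^ 2)" unfolding H2 ..
    also have "\<dots> = - poly r 1 * Rp p q ^ 2 / a" unfolding X1
      by (simp add: field_simps power_mult_distrib[symmetric])
    finally show ?thesis unfolding r_def by simp
  qed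
  define t where "t = poly q 1 - poly p 1"
  define X where "X = Rp p q"
  define P0 where "P0 = poly p 0"
  have e4: "(-4::complex)^(2*d) = 4^(2*d)" by (simp add: power_mult)
  have "Rp g (4 * p * q * (q - p) * ([:0,1:] * q - p)) ^ 2 = 
     (4^(2*d) * (P0^2/a^2) * (X^2)^2 * (- t * X^2 / a)^2)^2"
    unfolding main RgX Rgq Rgr e4 t_def X_def P0_def ..
  also have "\<dots> = 4^(4*d) * t^4 * P0^4 / a^8 * X^16" using a0
    by (simp add: field_simps power_mult_distrib flip: power_mult power_add)
  finally show ?thesis unfolding g_def t_def X_def P0_def a_def d_def .
qed



interpretation cph: comm_ring_hom "\<lambda>a::complex. [:a:]"
  by unfold_locales (auto simp: one_pCons)
interpretation cph2: map_poly_comm_ring_hom "\<lambda>a::complex. [:a:]" ..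
interpretation cph3: map_poly_comm_ring_hom "map_poly (\<lambda>a::complex. [:a:])" ..

definition psi :: "bpoly \<Rightarrow> complex poly poly" where
  "psi H = poly (map_poly (map_poly (\<lambda>a::complex. [:a:])) H) [:0, [:0,1:]:]"

lemma psi_mult: "psi (A * B) = psi A * psi B"
  unfolding psi_def by (simp add: cph3.hom_mult)
lemma psi_add: "psi (A + B) = psi A + psi B"
  unfolding psi_def by (simp add: cph3.hom_add)
lemma psi_minus: "psi (A - B) = psi A - psi B"
  unfolding psi_def by (simp add: cph3.hom_minus)
lemma psi_uminus: "psi (- A) = - psi A"
  unfolding psi_def by (simp add: cph3.hom_uminus)
lemma psi_0: "psi 0 = 0" unfolding psi_def by simp

lemma psi_pCons: "psi (pCons c H) = map_poly (\<lambda>a. [:a:]) c + [:0, [:0,1:]:] * psi H"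
  unfolding psi_def by (simp add: cph2.map_poly_pCons_hom)

lemma coeff_psi: "coeff (coeff (psi H) k) i = (if i \<le> k then coeff (coeff H i) (k - i) else 0)"
proof (induction H arbitrary: k i)
  case 0 thus ?case by (simp add: psi_0)
next
  case (pCons c H)
  have "coeff (coeff (psi (pCons c H)) k) i =
        coeff (coeff (map_poly (\<lambda>a. [:a:]) c) k) i + coeff (coeff ([:0, [:0,1:]:] * psi H) k) i"
    unfolding psi_pCons by simp
  also have "coeff (coeff (map_poly (\<lambda>a. [:a:]) c) k) i = (if i = 0 then coeff c k else 0)"
    by (simp add: coeff_map_poly coeff_const)
  also have "coeff ([:0, [:0,1:]:] * psi H) k = (if k = 0 then 0 else [:0,1:] * coeff (psi H) (k - 1))"
    by (cases k) (simp_all)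
  also have "coeff (if k = 0 then 0 else [:0,1:] * coeff (psi H) (k - 1)) i =
     (if k = 0 \<or> i = 0 then 0 else coeff (coeff (psi H) (k - 1)) (i - 1))"
    by (cases i) auto
  finally show ?case using pCons.IH
    by (cases i; cases k) auto
qed

lemma coeff_psi_add: "coeff (coeff (psi H) (i + j)) i = coeff (coeff H i) j"
  by (simp add: coeff_psi)

lemma psi_eq0: "psi H = 0 \<Longrightarrow> H = 0"
proof -
  assume "psi H = 0"
  hence "coeff (coeff H i) j = 0" for i j using coeff_psi_add[of H i j] by simp
  thus "H = 0" by (intro poly_eqI) (simp add: poly_eq_iff)
qed

lemma is_hom_psi: "is_hom d H \<longleftrightarrow> (\<forall>k. k \<noteq> d \<longrightarrow> coeff (psi H) k = 0)"
proof
  assume h: "is_hom d H"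
  show "\<forall>k. k \<noteq> d \<longrightarrow> coeff (psi H) k = 0"
  proof (intro allI impI poly_eqI)
    fix k i assume "k \<noteq> d"
    thus "coeff (coeff (psi H) k) i = coeff 0 i" using h unfolding is_hom_def coeff_psi
      by (cases "i \<le> k") (simp, metis le_add_diff_inverse, simp)
  qed
next
  assume h: "\<forall>k. k \<noteq> d \<longrightarrow> coeff (psi H) k = 0"
  show "is_hom d H" unfolding is_hom_def
  proof (intro allI impI)
    fix i j assume "coeff (coeff H i) j \<noteq> 0"
    hence "coeff (psi H) (i + j) \<noteq> 0" using coeff_psi_add[of H i j] by auto
    thus "i + j = d" using h by auto
  qed
qed

lemma monom_char: "(\<forall>k. k \<noteq> d \<longrightarrow> coeff P k = 0) \<longleftrightarrow> P = monom (coeff P d) d"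
proof
  assume "\<forall>k. k \<noteq> d \<longrightarrow> coeff P k = 0"
  thus "P = monom (coeff P d) d" by (intro poly_eqI) (auto simp: coeff_monom)
next
  assume "P = monom (coeff P d) d"
  thus "\<forall>k. k \<noteq> d \<longrightarrow> coeff P k = 0" by (metis coeff_monom)
qed

lemma is_hom_psi': "is_hom d H \<longleftrightarrow> psi H = monom (coeff (psi H) d) d"
  unfolding is_hom_psi monom_char ..

lemma hom_mult: "is_hom a A \<Longrightarrow> is_hom b B \<Longrightarrow> is_hom (a + b) (A * B)"
  unfolding is_hom_psi' psi_mult
  by (metis coeff_monom mult_monom)

lemma hom_add: "is_hom d A \<Longrightarrow> is_hom d B \<Longrightarrow> is_hom d (A + B)"
  unfolding is_hom_def by (metis add.left_neutral coeff_add)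
lemma hom_minus: "is_hom d A \<Longrightarrow> is_hom d B \<Longrightarrow> is_hom d (A - B)"
  unfolding is_hom_def by (metis coeff_diff diff_zero)
lemma hom_uminus: "is_hom d A \<Longrightarrow> is_hom d (- A)"
  unfolding is_hom_def by simp
lemma hom_zero: "is_hom d 0"
  unfolding is_hom_def by simp
lemma hom_power: "is_hom a A \<Longrightarrow> is_hom (n * a) (A ^ n)"
proof (induction n)
  case 0 thus ?case unfolding is_hom_def by (auto simp: coeff_1 split: if_splits)
next
  case (Suc n) thus ?case using hom_mult[of a A "n * a" "A^n"] by (simp add: add.commute)
qed
lemma hom_T1: "is_hom 1 T1"
  unfolding is_hom_def T1_def by (auto simp: coeff_pCons split: nat.splits)
lemma hom_T2: "is_hom 1 T2"
  unfolding is_hom_def T2_def by (auto simp: coeff_pCons split: nat.splits)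
lemma hom_numeral: "is_hom 0 (numeral n :: bpoly)"
  unfolding is_hom_def by (auto simp: numeral_poly coeff_pCons split: nat.splits)

lemma hom_unique: "is_hom a H \<Longrightarrow> is_hom b H \<Longrightarrow> H \<noteq> 0 \<Longrightarrow> a = b"
proof -
  assume "is_hom a H" "is_hom b H" "H \<noteq> 0"
  then obtain i j where "coeff (coeff H i) j \<noteq> 0"
    by (metis leading_coeff_neq_0)
  thus "a = b" using \<open>is_hom a H\<close> \<open>is_hom b H\<close> unfolding is_hom_def by metis
qed


lemma order_monom0: fixes m :: "'a::idom" shows "m \<noteq> 0 \<Longrightarrow> order 0 (monom m c) = c"
proof -
  assume m: "m \<noteq> 0"
  have e: "monom m c = [:- 0, 1:] ^ c * [:m:]"
    by (simp add: monom_altdef)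
  have "order 0 ([:- 0, 1:] ^ c * [:m:]) = order 0 (([:- 0, 1:] :: 'a poly) ^ c) + order 0 [:m:]"
    using order_mult[of "[:- 0, 1:] ^ c" "[:m:]" 0] m by simp
  also have "\<dots> = c" using m order_power_n_n[of "0::'a" c] by (simp add: order_0I)
  finally show ?thesis unfolding e .
qed

lemma monom_dvd_coeff: fixes P :: "'a::comm_ring_1 poly" shows "[:0,1:] ^ n dvd P \<Longrightarrow> k < n \<Longrightarrow> coeff P k = 0"
proof -
  assume "[:0,1:] ^ n dvd P" "k < n"
  then obtain R where R: "P = [:0,1:] ^ n * R" by (auto elim!: dvdE)
  have "[:0,1:] ^ n = (monom 1 n :: 'a poly)" by (simp add: monom_altdef)
  hence "P = monom 1 n * R" using R by simp
  thus "coeff P k = 0" using \<open>k < n\<close> by (simp add: coeff_monom_mult)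
qed

lemma monom_factor:
  fixes P Q :: "'a :: idom poly"
  assumes PQ: "P * Q = monom m c" and m: "m \<noteq> 0"
  shows "\<forall>k. k \<noteq> degree P \<longrightarrow> coeff P k = 0"
proof -
  have P0: "P \<noteq> 0" and Q0: "Q \<noteq> 0" using PQ m by auto
  have "degree P + degree Q = c" using PQ m P0 Q0 by (metis degree_monom_eq degree_mult_eq)
  moreover have "order 0 P + order 0 Q = c"
    using order_mult[of P Q 0] PQ m P0 Q0 order_monom0[OF m, of c] by simp
  moreover have "order 0 P \<le> degree P" "order 0 Q \<le> degree Q" using P0 Q0 by (auto intro: order_degree)
  ultimately have eq: "order 0 P = degree P" by linarith
  have "[:0,1:] ^ degree P dvd P" using order_1[of 0 P] unfolding eq by simp
  show ?thesis
  proof (intro allI impI)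
    fix k assume "k \<noteq> degree P"
    then consider "k < degree P" | "k > degree P" by linarith
    thus "coeff P k = 0"
    proof cases
      case 1 thus ?thesis using monom_dvd_coeff[OF \<open>[:0,1:] ^ degree P dvd P\<close>] by auto
    next
      case 2 thus ?thesis by (simp add: coeff_eq_0)
    qed
  qed
qed

lemma hom_factor:
  assumes h: "is_hom c (A * B)" and nz: "A * B \<noteq> 0"
  shows "\<exists>a. is_hom a A \<and> is_hom (c - a) B \<and> a \<le> c"
proof -
  have e: "psi A * psi B = monom (coeff (psi (A*B)) c) c" using h unfolding is_hom_psi' psi_mult by simp
  have m: "coeff (psi (A*B)) c \<noteq> 0"
  proof
    assume "coeff (psi (A*B)) c = 0"
    hence "psi (A * B) = 0" using h unfolding is_hom_psi' by simp
    thus False using psi_eq0 nz by blast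
  qed
  have hA: "is_hom (degree (psi A)) A" unfolding is_hom_psi using monom_factor[OF e m] .
  have hB: "is_hom (degree (psi B)) B" unfolding is_hom_psi 
    using monom_factor[of "psi B" "psi A", OF _ m] e by (simp add: mult.commute)
  have "psi A \<noteq> 0" "psi B \<noteq> 0" using e m by auto
  hence "degree (psi A) + degree (psi B) = c" using e m by (metis degree_monom_eq degree_mult_eq)
  thus ?thesis using hA hB by (intro exI[of _ "degree (psi A)"]) auto
qed


interpretation evh: map_poly_comm_ring_hom "\<lambda>p::complex poly. poly p a" for a ..

lemma dehom_mult: "dehom (A * B) = dehom A * dehom B" unfolding dehom_def by (simp add: evh.hom_mult)
lemma dehom_add: "dehom (A + B) = dehom A + dehom B" unfolding dehom_def by (simp add: evh.hom_add)
lemma dehom_minus: "dehom (A - B) = dehom A - dehom B" unfolding dehom_def by (simp add: evh.hom_minus)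
lemma dehom_power: "dehom (A ^ n) = dehom A ^ n" unfolding dehom_def by (simp add: evh.hom_power)
lemma dehom_numeral: "dehom (numeral n) = numeral n" unfolding dehom_def by (simp add: evh.hom_numeral)
lemma dehom_T1: "dehom T1 = [:0,1:]" unfolding dehom_def T1_def by simp
lemma dehom_T2: "dehom T2 = 1" unfolding dehom_def T2_def by simp
lemmas dehom_simps = dehom_mult dehom_add dehom_minus dehom_power dehom_numeral dehom_T1 dehom_T2

lemma T2_dvd_iff: "T2 dvd H \<longleftrightarrow> map_poly (\<lambda>c. poly c 0) H = 0"
proof -
  have "T2 dvd H \<longleftrightarrow> (\<forall>n. [:0,1:] dvd coeff H n)" unfolding T2_def by (rule const_poly_dvd_iff)
  also have "\<dots> \<longleftrightarrow> (\<forall>n. poly (coeff H n) 0 = 0)" by (simp add: dvd_iff_poly_eq_0[of 0, simplified])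
  also have "\<dots> \<longleftrightarrow> map_poly (\<lambda>c. poly c 0) H = 0" by (simp add: poly_eq_iff coeff_map_poly)
  finally show ?thesis .
qed

lemma T2_dvd_mult: "T2 dvd A * B \<longleftrightarrow> T2 dvd A \<or> T2 dvd B"
  unfolding T2_dvd_iff by (simp add: evh.hom_mult)

lemma hom_coeff: "is_hom d H \<Longrightarrow> coeff H i = (if i \<le> d then monom (coeff (coeff H i) (d - i)) (d - i) else 0)"
proof -
  assume h: "is_hom d H"
  have z: "coeff (coeff H i) j = 0" if "i + j \<noteq> d" for j using h that unfolding is_hom_def by blast
  show ?thesis
  proof (intro poly_eqI)
    fix j
    show "coeff (coeff H i) j = coeff (if i \<le> d then monom (coeff (coeff H i) (d - i)) (d - i) else 0) j"
      by (cases "i \<le> d") (auto simp: coeff_monom intro!: z)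
  qed
qed

lemma coeff_dehom_hom: assumes h: "is_hom d H"
  shows "coeff (dehom H) i = (if i \<le> d then coeff (coeff H i) (d - i) else 0)"
proof -
  define m where "m = coeff (coeff H i) (d - i)"
  have c: "coeff H i = (if i \<le> d then monom m (d - i) else 0)" unfolding m_def by (rule hom_coeff[OF h])
  have "coeff (dehom H) i = poly (coeff H i) 1" unfolding dehom_def by (simp add: coeff_map_poly)
  also have "\<dots> = (if i \<le> d then m else 0)" unfolding c by (simp add: poly_monom)
  finally show ?thesis unfolding m_def .
qed

lemma hcoeffs_hom: "is_hom d H \<Longrightarrow> hcoeffs d H = dehom H"
  unfolding hcoeffs_def
  by (intro poly_eqI) (simp add: coeff_Poly nth_default_def coeff_dehom_hom less_Suc_eq_le del: upt_Suc)

lemma degree_dehom_hom: "is_hom d H \<Longrightarrow> degree (dehom H) \<le> d"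
  by (rule degree_le) (simp add: coeff_dehom_hom)

lemma E0_hom: assumes h: "is_hom d H" shows "map_poly (\<lambda>c. poly c 0) H = monom (coeff (dehom H) d) d"
proof (intro poly_eqI)
  fix i
  have z: "coeff (coeff H i) 0 = 0" if "i \<noteq> d" using h that unfolding is_hom_def by force
  show "coeff (map_poly (\<lambda>c. poly c 0) H) i = coeff (monom (coeff (dehom H) d) d) i"
    using z by (simp add: coeff_map_poly coeff_monom coeff_dehom_hom[OF h] poly_0_coeff_0)
qed

lemma eval2_10: "is_hom d H \<Longrightarrow> eval2 H 1 0 = coeff (dehom H) d"
  unfolding eval2_def by (simp add: E0_hom poly_monom)

lemma T2_dvd_hom: "is_hom d H \<Longrightarrow> T2 dvd H \<longleftrightarrow> eval2 H 1 0 = 0"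
  unfolding T2_dvd_iff by (simp add: E0_hom eval2_10)

lemma eval2_x1: "eval2 H x 1 = poly (dehom H) x"
  unfolding eval2_def dehom_def ..

lemma total_degree_hom: assumes "is_hom d H" "H \<noteq> 0" shows "total_degree H = d"
proof -
  obtain i j where ij: "coeff (coeff H i) j \<noteq> 0" using assms(2) by (metis leading_coeff_neq_0)
  have "{i + j |i j. coeff (coeff H i) j \<noteq> 0} = {d}"
    using assms(1) ij unfolding is_hom_def by blast
  thus ?thesis unfolding total_degree_def by simp
qed

lemma total_degree_0: "total_degree 0 = 0"
  unfolding total_degree_def by simp

lemma hdeg_hom: assumes "is_hom d A" "is_hom d B" "A \<noteq> 0" shows "hdeg (A, B) = d"
  unfolding hdeg_def using total_degree_hom[OF assms(1,3)] total_degree_hom[OF assms(2)] total_degree_0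
  by (cases "B = 0") auto

lemma Res_hom: assumes "is_hom d A" "is_hom d B" "A \<noteq> 0"
  shows "Res (A, B) = resultant_sub d d (dehom A) (dehom B)"
  unfolding Res_def hdeg_hom[OF assms] using assms by (simp add: hcoeffs_hom)



lemma hom_cong: "is_hom a X \<Longrightarrow> a = b \<Longrightarrow> is_hom b X" by simp

lemma T2_nz: "T2 \<noteq> 0" unfolding T2_def by simp

lemma Q_hom:
  assumes "is_hom d (T2 * Q)" "Q \<noteq> 0"
  shows "\<exists>e. d = Suc e \<and> is_hom e Q"
proof -
  have "T2 * Q \<noteq> 0" using assms(2) T2_nz by simp
  then obtain a where a: "is_hom a T2" "is_hom (d - a) Q" "a \<le> d"
    using hom_factor[OF assms(1)] by blast
  have "a = 1" using hom_unique[OF a(1) hom_T2 T2_nz] .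
  thus ?thesis using a by (intro exI[of _ "d - 1"]) auto
qed

lemma step:
  fixes P Q :: bpoly
  assumes hP: "is_hom d P" and hQ: "is_hom d (T2 * Q)" and e: "eval2 P 1 0 \<noteq> 0"
  defines "A1 \<equiv> (T1 * T2 * Q^2 - P^2)^2"
    and "Q' \<equiv> 4 * P * Q * (T2 * Q - P) * (T1 * Q - P)"
  shows "pair_div (Fmap (P, T2 * Q)) (T2^2) = (A1, T2 * Q')"
    and "is_hom (4*d) A1" and "is_hom (4*d) (T2 * Q')" and "eval2 A1 1 0 = eval2 P 1 0 ^ 4"
    and "Res (A1, T2 * Q') = 4^(4*d) * (eval2 Q 1 1 - eval2 P 1 1)^4 * eval2 P 0 1^4 / eval2 P 1 0^8
           * Res (P, T2 * Q)^16"
    and "eval2 A1 1 1 - eval2 (T2 * Q') 1 1 = (eval2 P 1 1 - eval2 (T2 * Q) 1 1)^4"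
    and "eval2 A1 0 1 = eval2 P 0 1 ^ 4"
proof -
  have "Fmap (P, T2 * Q) = ((T1 * (T2 * Q)^2 - T2 * P^2)^2,
       4 * T2 * P * (T2 * Q) * (T2 * Q - P) * (T1 * (T2 * Q) - T2 * P))"
    unfolding Fmap_def by (simp add: Let_def)
  also have "\<dots> = (T2^2 * A1, T2^2 * (T2 * Q'))"
    unfolding A1_def Q'_def by (simp add: algebra_simps power2_eq_square)
  finally show "pair_div (Fmap (P, T2 * Q)) (T2^2) = (A1, T2 * Q')"
    unfolding pair_div_def using T2_nz by simp
  have hP2: "is_hom (2*d) (P^2)" using hom_power[OF hP, of 2] .
  have hA: "is_hom (2*d) (T1 * T2 * Q^2 - P^2)"
  proof (cases "Q = 0")
    case True thus ?thesis using hP2 by (simp add: hom_uminus)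
  next
    case False
    then obtain e where de: "d = Suc e" and he: "is_hom e Q" using Q_hom[OF hQ] by blast
    have "is_hom (1 + 1 + 2 * e) (T1 * T2 * Q^2)"
      by (intro hom_mult hom_T1 hom_T2 hom_power he)
    hence "is_hom (2*d) (T1 * T2 * Q^2)" by (rule hom_cong) (simp add: de)
    thus ?thesis using hP2 by (rule hom_minus)
  qed
  show hA1: "is_hom (4*d) A1" unfolding A1_def using hom_power[OF hA, of 2] by (rule hom_cong) simp
  show hQ': "is_hom (4*d) (T2 * Q')"
  proof (cases "Q = 0")
    case True thus ?thesis unfolding Q'_def by (simp add: hom_zero)
  next
    case False
    then obtain e where de: "d = Suc e" and he: "is_hom e Q" using Q_hom[OF hQ] by blast
    have "is_hom d (T1 * Q)" using hom_mult[OF hom_T1 he] de by simp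
    hence h1: "is_hom d (T1 * Q - P)" using hP by (rule hom_minus)
    have h2: "is_hom d (T2 * Q - P)" using hQ hP by (rule hom_minus)
    have "is_hom (1 + (0 + d + e + d + d)) (T2 * (4 * P * Q * (T2 * Q - P) * (T1 * Q - P)))"
      by (intro hom_mult hom_T2 hom_numeral hP he h1 h2)
    thus ?thesis unfolding Q'_def by (rule hom_cong) (simp add: de)
  qed
  define p where "p = dehom P"
  define q where "q = dehom Q"
  define a where "a = eval2 P 1 0"
  have a0: "a \<noteq> 0" using e unfolding a_def .
  have cp: "coeff p d = a" unfolding p_def a_def using eval2_10[OF hP] by simp
  have dp: "degree p = d" using degree_dehom_hom[OF hP] cp a0 unfolding p_def
    by (metis le_antisym le_degree)
  have p0: "p \<noteq> 0" using cp a0 by auto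
  have lp: "lead_coeff p = a" using cp dp by simp
  have dq': "dehom (T2 * Q) = q" unfolding q_def by (simp add: dehom_simps)
  have "T2 dvd T2 * Q" by simp
  hence "eval2 (T2 * Q) 1 0 = 0" using T2_dvd_hom[OF hQ] by simp
  hence cq: "coeff q d = 0" using eval2_10[OF hQ] dq' by simp
  have dqle: "degree q \<le> d" using degree_dehom_hom[OF hQ] dq' by simp
  have dq: "q = 0 \<or> degree q < degree p"
  proof (cases "degree q = d")
    case True thus ?thesis using cq by (metis leading_coeff_0_iff)
  qed (use dqle dp in auto)
  define g where "g = [:0,1:] * q^2 - p^2"
  have gprops: "degree g = 2 * degree p \<and> lead_coeff g = - (lead_coeff p ^ 2)"
    unfolding g_def by (rule core_g[OF p0 dq])
  have dA1: "dehom A1 = g^2" unfolding A1_def g_def p_def q_def by (simp add: dehom_simps)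
  have dQ': "dehom (T2 * Q') = 4 * p * q * (q - p) * ([:0,1:] * q - p)"
    unfolding Q'_def p_def q_def by (simp add: dehom_simps)
  have lg: "lead_coeff g = - (a^2)" using gprops unfolding lp by blast
  have g0: "g \<noteq> 0"
  proof
    assume "g = 0"
    with lg a0 show False by simp
  qed
  have dg2: "degree (g^2) = 4 * d" using gprops dp g0 by (simp add: degree_power_eq)
  have lg2: "lead_coeff (g^2) = a^4"
  proof -
    have "lead_coeff (g^2) = (- (a^2))^2" by (simp only: lead_coeff_power lg)
    thus ?thesis by simp
  qed
  have A10: "A1 \<noteq> 0" using dA1 g0 by (auto simp: dehom_def)
  show "eval2 A1 1 0 = eval2 P 1 0 ^ 4"
    using eval2_10[OF hA1] dA1 dg2 lg2 unfolding a_def by simp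
  have "Res (A1, T2 * Q') = resultant_sub (4*d) (4*d) (g^2) (4 * p * q * (q - p) * ([:0,1:] * q - p))"
    using Res_hom[OF hA1 hQ' A10] dA1 dQ' by simp
  also have "\<dots> = (a^4)^(4*d) * Rp (g^2) (4 * p * q * (q - p) * ([:0,1:] * q - p))"
    using R2[of "g^2" "4*d" "4 * p * q * (q - p) * ([:0,1:] * q - p)" "4*d"] g0 dg2 lg2
      degree_dehom_hom[OF hQ'] dQ' by simp
  also have "Rp (g^2) (4 * p * q * (q - p) * ([:0,1:] * q - p)) =
     Rp g (4 * p * q * (q - p) * ([:0,1:] * q - p)) ^ 2" using g0 by (rule Rp_sq)
  also have "\<dots> = 4^(4 * d) * (poly q 1 - poly p 1)^4 * poly p 0^4 / a^8 * Rp p q ^ 16"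
    using core1[OF p0 dq] unfolding g_def unfolding lp unfolding dp .
  finally have R1: "Res (A1, T2 * Q') = (a^4)^(4*d) * (4^(4 * d) * (poly q 1 - poly p 1)^4 * poly p 0^4 / a^8 * Rp p q ^ 16)" .
  have "Res (P, T2 * Q) = resultant_sub d d p q"
  proof -
    have P0: "P \<noteq> 0" using p0 unfolding p_def by (auto simp: dehom_def)
    show ?thesis using Res_hom[OF hP hQ P0] dq' unfolding p_def by simp
  qed
  also have "\<dots> = a^d * Rp p q" using R2[OF p0 dp dqle] lp by simp
  finally have R0: "Res (P, T2 * Q) = a^d * Rp p q" .
  show "Res (A1, T2 * Q') = 4^(4*d) * (eval2 Q 1 1 - eval2 P 1 1)^4 * eval2 P 0 1^4 / eval2 P 1 0^8
           * Res (P, T2 * Q)^16"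
    unfolding R1 R0 eval2_x1 a_def[symmetric] p_def[symmetric] q_def[symmetric]
    by (simp add: power_mult_distrib power_mult[symmetric] mult_ac)
  show "eval2 A1 1 1 - eval2 (T2 * Q') 1 1 = (eval2 P 1 1 - eval2 (T2 * Q) 1 1)^4"
    unfolding eval2_x1 dA1 dQ' dq' g_def p_def[symmetric]
    by (simp add: algebra_simps power2_eq_square power4_eq_xxxx)
  show "eval2 A1 0 1 = eval2 P 0 1 ^ 4"
    unfolding eval2_x1 dA1 g_def p_def[symmetric] by (simp add: power2_eq_square power4_eq_xxxx)
qed




lemma T2_not_unit: "\<not> T2 dvd 1"
  unfolding T2_dvd_iff by simp

lemma T2_not_dvd_T1: "\<not> T2 dvd T1"
  unfolding T2_dvd_iff T1_def by simp

lemma T2_dvd_power: "T2 dvd A ^ Suc n \<Longrightarrow> T2 dvd A"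
  by (induction n) (auto simp: T2_dvd_mult)

definition Inv :: "nat \<Rightarrow> bpoly \<times> bpoly \<Rightarrow> bool" where
  "Inv k H \<longleftrightarrow> (\<exists>P Q. H = (P, T2 * Q) \<and> is_hom k P \<and> is_hom k (T2 * Q) \<and> eval2 P 1 0 \<noteq> 0)"

lemma M1_nz:
  fixes z w :: bpoly
  assumes cop: "coprime z w"
  shows "T1 * w^2 - T2 * z^2 \<noteq> 0"
proof
  assume eq0: "T1 * w^2 - T2 * z^2 = 0"
  hence eq: "T1 * w^2 = T2 * z^2" by simp
  show False
  proof (cases "w = 0")
    case True
    hence "is_unit z" using cop by simp
    hence "z \<noteq> 0" by auto
    thus False using eq True T2_nz by simp
  next
    case w0: False
    show False
    proof (cases "z = 0")
      case True thus False using eq w0 by (simp add: T1_def)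
    next
      case z0: False
      have "degree (T1 * w^2) = 1 + 2 * degree w" using w0
        by (simp add: degree_mult_eq degree_power_eq T1_def)
      moreover have "degree (T2 * z^2) = 2 * degree z" using z0 T2_nz
        by (simp add: degree_mult_eq degree_power_eq T2_def)
      ultimately have "1 + 2 * degree w = 2 * degree z" using eq by simp
      thus False by presburger
    qed
  qed
qed



lemma F1_inv:
  fixes z w :: bpoly
  assumes cop: "coprime z w" and hz: "is_hom e z" and hw: "is_hom e w"
  shows "\<exists>k. Inv k (pair_div (Fmap (z, w)) (pair_gcd (Fmap (z, w))))"
proof -
  define X where "X = T1 * w^2 - T2 * z^2"
  define M1 where "M1 = X^2"
  define M2 where "M2 = 4 * T2 * z * w * (w - z) * (T1 * w - T2 * z)"
  have FM: "Fmap (z, w) = (M1, M2)" unfolding Fmap_def M1_def M2_def X_def by (simp add: Let_def)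
  define g where "g = gcd M1 M2"
  define P1 where "P1 = M1 div g"
  define Q1 where "Q1 = M2 div g"
  have F1: "pair_div (Fmap (z, w)) (pair_gcd (Fmap (z, w))) = (P1, Q1)"
    unfolding FM pair_div_def pair_gcd_def P1_def Q1_def g_def by simp
  have X0: "X \<noteq> 0" unfolding X_def by (rule M1_nz[OF cop])
  have M10: "M1 \<noteq> 0" unfolding M1_def using X0 by simp
  have g0: "g \<noteq> 0" unfolding g_def using M10 by simp
  have eP: "M1 = g * P1" unfolding P1_def g_def by simp
  have eQ: "M2 = g * Q1" unfolding Q1_def g_def by simp
  have hX: "is_hom (2 * e + 1) X" unfolding X_def
  proof (rule hom_minus)
    show "is_hom (2 * e + 1) (T1 * w^2)" using hom_mult[OF hom_T1 hom_power[OF hw, of 2]] by (rule hom_cong) simp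
    show "is_hom (2 * e + 1) (T2 * z^2)" using hom_mult[OF hom_T2 hom_power[OF hz, of 2]] by (rule hom_cong) simp
  qed
  have hM1: "is_hom (4 * e + 2) M1" unfolding M1_def using hom_power[OF hX, of 2] by (rule hom_cong) simp
  have hM2: "is_hom (4 * e + 2) M2" unfolding M2_def
  proof -
    have h1: "is_hom (e + 1) (T1 * w - T2 * z)"
      by (intro hom_minus) (rule hom_cong, rule hom_mult[OF hom_T1 hw], simp, rule hom_cong, rule hom_mult[OF hom_T2 hz], simp)
    have "is_hom (0 + 1 + e + e + e + (e + 1)) (4 * T2 * z * w * (w - z) * (T1 * w - T2 * z))"
      by (intro hom_mult hom_numeral hom_T2 hz hw hom_minus h1)
    thus "is_hom (4 * e + 2) (4 * T2 * z * w * (w - z) * (T1 * w - T2 * z))" by (rule hom_cong) simp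
  qed
  obtain a where ha: "is_hom a g" and hP1: "is_hom (4 * e + 2 - a) P1"
    using hom_factor[of "4 * e + 2" g P1] hM1 M10 eP by auto
  have hQ1: "is_hom (4 * e + 2 - a) Q1"
  proof (cases "M2 = 0")
    case True
    hence "Q1 = 0" using eQ g0 by simp
    thus ?thesis by (simp add: hom_zero)
  next
    case False
    then obtain a' where ha': "is_hom a' g" and hQ: "is_hom (4 * e + 2 - a') Q1"
      using hom_factor[of "4 * e + 2" g Q1] hM2 eQ by auto
    have "a' = a" using hom_unique[OF ha' ha g0] .
    thus ?thesis using hQ by simp
  qed
  have T2M2: "T2 dvd M2" unfolding M2_def by (simp add: mult.assoc mult.left_commute[of _ T2])
  have key: "\<not> T2 dvd P1 \<and> T2 dvd Q1"
  proof (cases "T2 dvd w")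
    case False
    have nM1: "\<not> T2 dvd M1"
    proof
      assume "T2 dvd M1"
      hence "T2 dvd X" unfolding M1_def by (simp add: power2_eq_square T2_dvd_mult)
      moreover have "T2 dvd T2 * z^2" by simp
      ultimately have "T2 dvd X + T2 * z^2" by (rule dvd_add)
      hence "T2 dvd T1 * (w * w)" unfolding X_def by (simp add: power2_eq_square)
      thus False using False T2_not_dvd_T1 by (simp add: T2_dvd_mult)
    qed
    have "\<not> T2 dvd P1"
    proof
      assume "T2 dvd P1"
      hence "T2 dvd g * P1" by simp
      thus False using nM1 eP by simp
    qed
    moreover have "T2 dvd Q1"
    proof -
      have "T2 dvd g * Q1" using T2M2 eQ by simp
      moreover have "\<not> T2 dvd g"
      proof
        assume "T2 dvd g"
        hence "T2 dvd g * P1" by simp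
        thus False using nM1 eP by simp
      qed
      ultimately show ?thesis by (simp add: T2_dvd_mult)
    qed
    ultimately show ?thesis ..
  next
    case True
    then obtain w' where w': "w = T2 * w'" by (auto elim!: dvdE)
    have nz: "\<not> T2 dvd z"
    proof
      assume "T2 dvd z"
      hence "is_unit T2" using coprime_common_divisor[OF cop _ True] by blast
      thus False using T2_not_unit by simp
    qed
    define K where "K = T1 * T2 * w'^2 - z^2"
    define L where "L = 4 * z * w' * (T2 * w' - z) * (T1 * w' - z)"
    have "X = T2 * K" unfolding X_def K_def w' by (simp add: algebra_simps power2_eq_square)
    hence eM1: "M1 = T2^2 * K^2" unfolding M1_def by (simp add: power_mult_distrib)
    have eM2: "M2 = T2^2 * (T2 * L)" unfolding M2_def L_def w'
      by (simp add: algebra_simps power2_eq_square)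
    have nK: "\<not> T2 dvd K"
    proof
      assume TK: "T2 dvd K"
      have "T2 dvd T1 * T2 * w'^2" by simp
      hence "T2 dvd T1 * T2 * w'^2 - K" using TK by (rule dvd_diff)
      hence "T2 dvd z^2" unfolding K_def by simp
      thus False using nz by (simp add: power2_eq_square T2_dvd_mult)
    qed
    have "T2^2 dvd g" unfolding g_def by (rule gcd_greatest) (simp_all add: eM1 eM2)
    then obtain g' where g': "g = T2^2 * g'" by (auto elim!: dvdE)
    have T20: "T2^2 \<noteq> 0" using T2_nz by simp
    have e1: "K^2 = g' * P1" using eP unfolding eM1 g' using T20 by (simp add: mult.assoc)
    have e2: "T2 * L = g' * Q1" using eQ unfolding eM2 g' using T20 by (simp add: mult.assoc)
    have nK2: "\<not> T2 dvd K^2" using nK by (simp add: power2_eq_square T2_dvd_mult)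
    have "\<not> T2 dvd P1"
    proof
      assume "T2 dvd P1"
      hence "T2 dvd g' * P1" by simp
      thus False using nK2 e1 by simp
    qed
    moreover have "T2 dvd Q1"
    proof -
      have "T2 dvd g' * Q1" using e2[symmetric] by simp
      moreover have "\<not> T2 dvd g'"
      proof
        assume "T2 dvd g'"
        hence "T2 dvd g' * P1" by simp
        thus False using nK2 e1 by simp
      qed
      ultimately show ?thesis by (simp add: T2_dvd_mult)
    qed
    ultimately show ?thesis ..
  qed
  then obtain Q where Q: "Q1 = T2 * Q" by (auto elim!: dvdE)
  have "eval2 P1 1 0 \<noteq> 0" using key T2_dvd_hom[OF hP1] by simp
  hence "Inv (4 * e + 2 - a) (P1, Q1)" unfolding Inv_def using hP1 hQ1 Q by auto
  thus ?thesis unfolding F1 by blast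
qed



definition rr :: "bpoly \<times> bpoly \<Rightarrow> complex" where
  "rr H = (eval2 (fst H) 1 1 - eval2 (snd H) 1 1) * eval2 (fst H) 0 1 / eval2 (fst H) 1 0 ^ 2"

lemma eval2_T2Q: "eval2 (T2 * Q) 1 1 = eval2 Q 1 1"
  unfolding eval2_x1 by (simp add: dehom_simps)

lemma iter_step:
  assumes "Inv k H"
  shows "Inv (4*k) (pair_div (Fmap H) (T2^2)) \<and> rr (pair_div (Fmap H) (T2^2)) = rr H ^ 4 \<and>
         Res (pair_div (Fmap H) (T2^2)) = 4^(4*k) * rr H ^ 4 * Res H ^ 16"
proof -
  obtain P Q where H: "H = (P, T2 * Q)" and hP: "is_hom k P" and hQ: "is_hom k (T2 * Q)"
    and e: "eval2 P 1 0 \<noteq> 0" using assms unfolding Inv_def by blast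
  define A1 where "A1 = (T1 * T2 * Q^2 - P^2)^2"
  define Q' where "Q' = 4 * P * Q * (T2 * Q - P) * (T1 * Q - P)"
  note st = step[OF hP hQ e, folded A1_def Q'_def]
  have S: "pair_div (Fmap H) (T2^2) = (A1, T2 * Q')" unfolding H by (rule st(1))
  have "Inv (4*k) (A1, T2 * Q')" unfolding Inv_def using st(2,3,4) e by auto
  moreover have "rr (A1, T2 * Q') = rr H ^ 4"
    unfolding rr_def H fst_conv snd_conv st(4) st(6) st(7) using e
    by (simp add: power_divide power_mult_distrib power_mult[symmetric])
  moreover have "Res (A1, T2 * Q') = 4^(4*k) * rr H ^ 4 * Res H ^ 16"
  proof -
    have "(eval2 Q 1 1 - eval2 P 1 1)^4 = (eval2 P 1 1 - eval2 Q 1 1)^4"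
      by (simp add: power4_eq_xxxx algebra_simps)
    thus ?thesis unfolding st(5) rr_def H fst_conv snd_conv eval2_T2Q using e
      by (simp add: power_divide power_mult_distrib power_mult[symmetric])
  qed
  ultimately show ?thesis unfolding S by blast
qed

fun Bf :: "nat \<Rightarrow> nat" where
  "Bf 0 = 0"
| "Bf (Suc m) = 16 * Bf m + 4 ^ Suc m"

lemma Bf_eq: "(4::nat) ^ (2 * m) = 3 * Bf m + 4 ^ m"
proof (induction m)
  case 0 thus ?case by simp
next
  case (Suc m)
  have "(4::nat) ^ (2 * Suc m) = 16 * 4 ^ (2 * m)" by (simp add: power_add)
  also have "\<dots> = 3 * Bf (Suc m) + 4 ^ Suc m" unfolding Suc by simp
  finally show ?case .
qed

lemma Bf_div: "((4::nat) ^ (2 * m) - 4 ^ m) div 3 = Bf m"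
  unfolding Bf_eq by simp

lemma iter:
  assumes "Inv d F"
  shows "Inv (4^m * d) (((\<lambda>H. pair_div (Fmap H) (T2^2)) ^^ m) F) \<and>
         rr (((\<lambda>H. pair_div (Fmap H) (T2^2)) ^^ m) F) = rr F ^ (4^m) \<and>
         Res (((\<lambda>H. pair_div (Fmap H) (T2^2)) ^^ m) F) = 4^(Bf m * d) * rr F ^ Bf m * Res F ^ (16^m)"
proof (induction m)
  case 0 thus ?case using assms by simp
next
  case (Suc m)
  define G where "G = ((\<lambda>H. pair_div (Fmap H) (T2^2)) ^^ m) F"
  have G: "((\<lambda>H. pair_div (Fmap H) (T2^2)) ^^ Suc m) F = pair_div (Fmap G) (T2^2)"
    unfolding G_def by simp
  have IH: "Inv (4^m * d) G" "rr G = rr F ^ (4^m)"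
      "Res G = 4^(Bf m * d) * rr F ^ Bf m * Res F ^ (16^m)"
    using Suc.IH unfolding G_def by auto
  note st = iter_step[OF IH(1)]
  have "Inv (4^Suc m * d) (pair_div (Fmap G) (T2^2))" using st by (simp add: mult.assoc)
  moreover have "rr (pair_div (Fmap G) (T2^2)) = rr F ^ (4^Suc m)"
    using st IH(2) by (simp add: power_mult[symmetric] mult.commute)
  moreover have "Res (pair_div (Fmap G) (T2^2)) = 4^(Bf (Suc m) * d) * rr F ^ Bf (Suc m) * Res F ^ (16^Suc m)"
  proof -
    have "Res (pair_div (Fmap G) (T2^2)) = 4^(4 * (4^m * d)) * (rr F ^ (4^m)) ^ 4 *
        (4^(Bf m * d) * rr F ^ Bf m * Res F ^ (16^m)) ^ 16"
      using st IH by simp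
    also have "\<dots> = 4^(4 * (4^m * d) + 16 * (Bf m * d)) * rr F ^ (4^m * 4 + Bf m * 16) * Res F ^ (16^m * 16)"
      by (simp add: power_add power_mult_distrib mult_ac flip: power_mult)
    also have "4 * (4^m * d) + 16 * (Bf m * d) = Bf (Suc m) * d" by (simp add: algebra_simps)
    also have "4^m * 4 + Bf m * 16 = Bf (Suc m)" by simp
    also have "(16::nat)^m * 16 = 16^Suc m" by simp
    finally show ?thesis .
  qed
  ultimately show ?case unfolding G by blast
qed

lemma Inv_hdeg: "Inv k H \<Longrightarrow> hdeg H = k"
proof -
  assume "Inv k H"
  then obtain P Q where H: "H = (P, T2 * Q)" and hP: "is_hom k P" and hQ: "is_hom k (T2 * Q)"
    and e: "eval2 P 1 0 \<noteq> 0" unfolding Inv_def by blast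
  have "P \<noteq> 0" using e by (auto simp: eval2_def)
  thus ?thesis unfolding H using hdeg_hom[OF hP hQ] by simp
qed

theorem proposition3p2:
  shows
  "(\<forall>(d::nat) (P::bpoly) (Q::bpoly).
      is_hom d P \<and> is_hom d (T2 * Q) \<and> eval2 P 1 0 \<noteq> 0 \<longrightarrow>
      Res (pair_div (Fmap (P, T2 * Q)) (T2^2)) =
        4 ^ (4 * d) * (eval2 Q 1 1 - eval2 P 1 1) ^ 4 * eval2 P 0 1 ^ 4 / eval2 P 1 0 ^ 8
        * Res (P, T2 * Q) ^ 16)
   \<and>
   (\<forall>(c::complex poly fract) (C::bpoly \<times> bpoly) F1 P1 Q1 d.
      c \<notin> {0, 1, Fract [:0, 1:] 1} \<and> is_hom_lift c C \<and>
      F1 = pair_div (Fmap C) (pair_gcd (Fmap C)) \<and> F1 = (P1, Q1) \<and> d = hdeg F1 \<longrightarrow>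
      (\<forall>n\<ge>1. let Fn = ((\<lambda>H. pair_div (Fmap H) (T2^2)) ^^ (n - 1)) F1;
                  A = (4 ^ (2 * (n - 1)) - 4 ^ (n - 1)) div 3 in
         Res Fn = 4 ^ (A * d)
           * ((eval2 P1 1 1 - eval2 Q1 1 1) * eval2 P1 0 1 / eval2 P1 1 0 ^ 2) ^ A
           * Res F1 ^ (4 ^ (2 * (n - 1)))))"
proof (intro conjI allI impI)
  fix d P Q
  assume a: "is_hom d P \<and> is_hom d (T2 * Q) \<and> eval2 P 1 0 \<noteq> 0"
  hence hP: "is_hom d P" and hQ: "is_hom d (T2 * Q)" and e: "eval2 P 1 0 \<noteq> 0" by auto
  note st = step[OF hP hQ e]
  show "Res (pair_div (Fmap (P, T2 * Q)) (T2^2)) =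
        4 ^ (4 * d) * (eval2 Q 1 1 - eval2 P 1 1) ^ 4 * eval2 P 0 1 ^ 4 / eval2 P 1 0 ^ 8
        * Res (P, T2 * Q) ^ 16" unfolding st(1) by (rule st(5))
next
  fix c :: "complex poly fract" and C :: "bpoly \<times> bpoly" and F1 P1 Q1 d and n :: nat
  assume a: "c \<notin> {0, 1, Fract [:0, 1:] 1} \<and> is_hom_lift c C \<and>
      F1 = pair_div (Fmap C) (pair_gcd (Fmap C)) \<and> F1 = (P1, Q1) \<and> d = hdeg F1"
    and n: "1 \<le> n"
  obtain z w where C: "C = (z, w)" by (cases C)
  from a have lift: "is_hom_lift c C" and F1: "F1 = pair_div (Fmap C) (pair_gcd (Fmap C))"
    and F1P: "F1 = (P1, Q1)" and dd: "d = hdeg F1" by auto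
  from lift obtain e where cop: "coprime z w" and hz: "is_hom e z" and hw: "is_hom e w"
    unfolding is_hom_lift_def C by auto
  obtain k where "Inv k F1" using F1_inv[OF cop hz hw] unfolding F1 C by blast
  moreover have "k = d" using Inv_hdeg[OF \<open>Inv k F1\<close>] dd by simp
  ultimately have I: "Inv d F1" by simp
  define m where "m = n - 1"
  note it = iter[OF I, of m]
  have A: "((4::nat) ^ (2 * m) - 4 ^ m) div 3 = Bf m" by (rule Bf_div)
  have r: "(eval2 P1 1 1 - eval2 Q1 1 1) * eval2 P1 0 1 / eval2 P1 1 0 ^ 2 = rr F1"
    unfolding rr_def F1P by simp
  have p16: "(4::nat) ^ (2 * m) = 16 ^ m" by (simp add: power_mult)
  show "let Fn = ((\<lambda>H. pair_div (Fmap H) (T2^2)) ^^ (n - 1)) F1;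
                  A = (4 ^ (2 * (n - 1)) - 4 ^ (n - 1)) div 3 in
         Res Fn = 4 ^ (A * d)
           * ((eval2 P1 1 1 - eval2 Q1 1 1) * eval2 P1 0 1 / eval2 P1 1 0 ^ 2) ^ A
           * Res F1 ^ (4 ^ (2 * (n - 1)))"
    unfolding Let_def m_def[symmetric] unfolding A unfolding r p16 using it by blast
qed


end
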